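(* Construct vectors in $\mathbb{R}^n$ as follows. For each $j=1,2,\dots,n$, choose $n-j+1$ linearly independent vectors in $\mathbb{R}^n$ each of which has its first $j-1$ coordinates equal to zero and its $j$-th coordinate nonzero (so for $j=1$: $n$ linearly independent vectors with nonzero first coordinate; for $j=2$: $n-1$ linearly independent vectors with zero first coordinate and nonzero second coordinate; and so on). The resulting collection $\{x_k\}_{k=1}^{\frac{n(n+1)}{2}}$ is a frame for $\mathbb{R}^n$ which is injective.
   Context: A family $\{x_k\}$ of vectors in a Hilbert space is called injective if whenever a self-adjoint operator $T$ satisfies $\langle Tx_k,x_k\rangle=0$ for all $k$, then $T=0$. *)

theory Defs
  imports "HOL-Analysis.Analysis"
begin

definition is_frame :: "'i set \<Rightarrow> ('i \<Rightarrow> 'a::real_inner) \<Rightarrow> bool" where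
  "is_frame I x \<longleftrightarrow> (\<exists>A B. 0 < A \<and> A \<le> B \<and>
     (\<forall>f. A * (norm f)^2 \<le> (\<Sum>i\<in>I. \<bar>inner f (x i)\<bar>^2) \<and>
          (\<Sum>i\<in>I. \<bar>inner f (x i)\<bar>^2) \<le> B * (norm f)^2))"

definition self_adjoint :: "('a::real_inner \<Rightarrow> 'a) \<Rightarrow> bool" where
  "self_adjoint T \<longleftrightarrow> bounded_linear T \<and> (\<forall>u v. inner (T u) v = inner u (T v))"

definition injective_family :: "'i set \<Rightarrow> ('i \<Rightarrow> 'a::real_inner) \<Rightarrow> bool" where
  "injective_family I x \<longleftrightarrow>
     (\<forall>T. self_adjoint T \<and> (\<forall>i\<in>I. inner (T (x i)) (x i) = 0) \<longrightarrow> T = (\<lambda>_. 0))"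

end

theory Submission
  imports Defs
begin

lemma span_Vj:
  fixes x :: "'n::{finite,wellorder} \<Rightarrow> nat \<Rightarrow> real^('n::{finite,wellorder})" and j :: "'n"
  assumes zero_before: "\<And>j k i. k < card {i. j \<le> i} \<Longrightarrow> i < j \<Longrightarrow> x j k $ i = 0"
      and distinct: "\<And>j. inj_on (x j) {..<card {i. j \<le> i}}"
      and indep: "\<And>j. independent (x j ` {..<card {i. j \<le> i}})"
  shows "{v. \<forall>i<j. v$i = 0} \<subseteq> span (x j ` {..<card {i. j \<le> i}})"
proof (rule card_ge_dim_independent)
  show "x j ` {..<card {i. j \<le> i}} \<subseteq> {v. \<forall>i<j. v$i = 0}"
    using zero_before by auto
  show "independent (x j ` {..<card {i. j \<le> i}})" by (rule indep)
  have c: "card (x j ` {..<card {i. j \<le> i}}) = card {i. j \<le> i}"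
    using distinct card_image by fastforce
  have sp: "{v. \<forall>i<j. v$i = 0} \<subseteq> span ((\<lambda>i. axis i (1::real)) ` {i. j \<le> i})"
  proof
    fix v :: "real^('n::{finite,wellorder})" assume v: "v \<in> {v. \<forall>i<j. v$i = 0}"
    have "v = (\<Sum>i\<in>{i. j \<le> i}. v$i *\<^sub>R axis i 1)"
    proof (subst vec_eq_iff, intro allI)
      fix k
      have e: "(\<lambda>i. v$i * (if k = i then 1 else 0)) = (\<lambda>i. if k = i then v$i else 0)" by auto
      have "(\<Sum>i\<in>{i. j \<le> i}. v$i *\<^sub>R axis i (1::real)) $ k = (\<Sum>i\<in>{i. j \<le> i}. v$i * (if k = i then 1 else 0))"
        by (simp add: axis_def)
      also have "\<dots> = (if j \<le> k then v$k else 0)"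
        unfolding e by simp
      also have "\<dots> = v $ k" using v by auto
      finally show "v $ k = (\<Sum>i\<in>{i. j \<le> i}. v$i *\<^sub>R axis i (1::real)) $ k" by simp
    qed
    also have "\<dots> \<in> span ((\<lambda>i. axis i (1::real)) ` {i. j \<le> i})"
      by (intro span_sum span_scale span_base) auto
    finally show "v \<in> span ((\<lambda>i. axis i (1::real)) ` {i. j \<le> i})" .
  qed
  have "dim {v::real^('n::{finite,wellorder}). \<forall>i<j. v$i = 0} \<le> card ((\<lambda>i. axis i (1::real)) ` {i. j \<le> i})"
    using dim_le_card[OF sp] by simp
  also have "\<dots> \<le> card {i. j \<le> i}" by (rule card_image_le) simp
  finally show "dim {v::real^('n::{finite,wellorder}). \<forall>i<j. v$i = 0} \<le> card (x j ` {..<card {i. j \<le> i}})" using c by simp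
qed


lemma inj_part:
  fixes x :: "'n::{finite,wellorder} \<Rightarrow> nat \<Rightarrow> real^('n::{finite,wellorder})"
    and T :: "real^('n::{finite,wellorder}) \<Rightarrow> real^('n::{finite,wellorder})"
  assumes zero_before: "\<And>j k i. k < card {i. j \<le> i} \<Longrightarrow> i < j \<Longrightarrow> x j k $ i = 0"
      and nonzero_at: "\<And>j k. k < card {i. j \<le> i} \<Longrightarrow> x j k $ j \<noteq> 0"
      and distinct: "\<And>j. inj_on (x j) {..<card {i. j \<le> i}}"
      and indep: "\<And>j. independent (x j ` {..<card {i. j \<le> i}})"
      and lin: "linear T"
      and sym: "\<And>u v. inner (T u) v = inner u (T v)"
      and h: "\<And>j k. k < card {i. j \<le> i} \<Longrightarrow> inner (T (x j k)) (x j k) = 0"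
  shows "T = (\<lambda>_. 0)"
proof -
  have symB: "\<And>u v. inner (T u) v = inner (T v) u" by (metis sym inner_commute)
  have Q: "\<forall>u v. (\<forall>i<j. u$i=0) \<longrightarrow> (\<forall>i<j. v$i=0) \<longrightarrow> inner (T u) v = 0" for j
  proof (induction "card {i. j < i}" arbitrary: j rule: less_induct)
    case less
    have IH': "\<forall>u v. (\<forall>i<j'. u$i=0) \<longrightarrow> (\<forall>i<j'. v$i=0) \<longrightarrow> inner (T u) v = 0" if "j < j'" for j'
    proof (rule less)
      have "{i. j' < i} \<subset> {i. j < i}" using that by auto
      then show "card {i. j' < i} < card {i. j < i}" by (rule psubset_card_mono[OF finite])
    qed
    define e where "e = axis j (1::real)"
    define c where "c = inner (T e) e"
    have W: "inner (T w1) w2 = 0" if w1: "\<forall>i\<le>j. w1$i=0" and w2: "\<forall>i\<le>j. w2$i=0" for w1 w2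
    proof (cases "w1 = 0")
      case True then show ?thesis by (simp add: linear_0[OF lin])
    next
      case False
      then obtain i0 where i0: "w1$i0 \<noteq> 0" by (metis vec_eq_iff zero_index)
      hence ji0: "j < i0" using w1 by (meson not_le)
      define j' where "j' = (LEAST i. j < i)"
      have jj: "j < j'" unfolding j'_def by (rule LeastI[of "\<lambda>i. j < i", OF ji0])
      have "\<forall>i<j'. i \<le> j" unfolding j'_def using not_less_Least not_le by blast
      then show ?thesis using IH'[OF jj] w1 w2 by auto
    qed
    have decomp: "\<exists>w. u = u$j *\<^sub>R e + w \<and> (\<forall>i\<le>j. w$i = 0)" if u: "\<forall>i<j. u$i=0" for u :: "real^('n::{finite,wellorder})"
    proof (intro exI conjI allI impI)
      show "u = u$j *\<^sub>R e + (u - u$j *\<^sub>R e)" by simp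
      fix i assume "i \<le> j"
      then show "(u - u$j *\<^sub>R e) $ i = 0" using u by (auto simp: e_def axis_def le_less)
    qed
    have ej: "e $ j = 1" by (simp add: e_def axis_def)
    define L where "L = (\<lambda>v::real^('n::{finite,wellorder}). 2 * inner (T e) v - v$j * c)"
    have linL: "linear L" by (auto simp: L_def linear_iff inner_add_right algebra_simps)
    have key: "inner (T v) v = v$j * L v" if v: "\<forall>i<j. v$i=0" for v
    proof -
      obtain w where w: "v = v$j *\<^sub>R e + w" and wW: "\<forall>i\<le>j. w$i = 0" using decomp[OF v] by blast
      define a where "a = v$j"
      have ww: "inner (T w) w = 0" using W wW by blast
      have "inner (T v) v = inner (T (a *\<^sub>R e + w)) (a *\<^sub>R e + w)" using w a_def by simp
      also have "\<dots> = a*a*c + a * inner (T e) w + a * inner (T w) e + inner (T w) w"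
        by (simp add: linear_add[OF lin] linear_scale[OF lin] inner_add_left inner_add_right c_def algebra_simps)
      also have "\<dots> = a * (2 * inner (T e) (a *\<^sub>R e + w) - a * c)"
        using ww symB[of w e] by (simp add: inner_add_right c_def algebra_simps)
      also have "\<dots> = v$j * L v" using w a_def L_def by metis
      finally show ?thesis .
    qed
    have Lx: "L (x j k) = 0" if "k < card {i. j \<le> i}" for k
      using key[of "x j k"] h[OF that] nonzero_at[OF that] zero_before[OF that] by auto
    have Lspan: "L v = 0" if "\<forall>i<j. v$i=0" for v
    proof (rule linear_eq_0_on_span[OF linL])
      show "\<And>y. y \<in> x j ` {..<card {i. j \<le> i}} \<Longrightarrow> L y = 0" using Lx by auto
      show "v \<in> span (x j ` {..<card {i. j \<le> i}})"
        using span_Vj[OF zero_before distinct indep, of j] that by auto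
    qed
    have eV: "\<forall>i<j. e$i = 0" by (simp add: e_def axis_def)
    have c0: "c = 0" using Lspan[OF eV] ej by (simp add: L_def c_def)
    have eW: "inner (T e) w = 0" if "\<forall>i\<le>j. w$i=0" for w
      using Lspan[of w] that by (simp add: L_def)
    show ?case
    proof (intro allI impI)
      fix u v :: "real^('n::{finite,wellorder})" assume u: "\<forall>i<j. u$i=0" and v: "\<forall>i<j. v$i=0"
      obtain w where w: "u = u$j *\<^sub>R e + w" and wW: "\<forall>i\<le>j. w$i = 0" using decomp[OF u] by blast
      obtain w' where w': "v = v$j *\<^sub>R e + w'" and wW': "\<forall>i\<le>j. w'$i = 0" using decomp[OF v] by blast
      have "inner (T u) v = inner (T (u$j *\<^sub>R e + w)) (v$j *\<^sub>R e + w')" using w w' by simp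
      also have "\<dots> = u$j * v$j * c + u$j * inner (T e) w' + v$j * inner (T w) e + inner (T w) w'"
        by (simp add: linear_add[OF lin] linear_scale[OF lin] inner_add_left inner_add_right c_def algebra_simps)
      also have "\<dots> = 0" using c0 eW[OF wW] eW[OF wW'] symB[of w e] W[OF wW wW'] by simp
      finally show "inner (T u) v = 0" .
    qed
  qed
  define j0 :: 'n where "j0 = (LEAST i. True)"
  have all: "\<forall>i<j0. u$i = 0" for u :: "real^('n::{finite,wellorder})"
    unfolding j0_def using not_less_Least by blast
  show ?thesis
  proof
    fix u
    have "inner (T u) (T u) = 0" using Q[of j0] all by blast
    then show "T u = 0" by simp
  qed
qed


lemma frame_part:
  fixes x :: "'n::{finite,wellorder} \<Rightarrow> nat \<Rightarrow> real^('n::{finite,wellorder})"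
  assumes zero_before: "\<And>j k i. k < card {i. j \<le> i} \<Longrightarrow> i < j \<Longrightarrow> x j k $ i = 0"
      and distinct: "\<And>j. inj_on (x j) {..<card {i. j \<le> i}}"
      and indep: "\<And>j. independent (x j ` {..<card {i. j \<le> i}})"
  shows "is_frame (SIGMA j:UNIV. {..<card {i. j \<le> i}}) (\<lambda>(j, k). x j k)"
proof -
  define I where "I = (SIGMA j:(UNIV::'n::{finite,wellorder} set). {..<card {i. j \<le> i}})"
  define X where "X = (\<lambda>(j, k). x j k)"
  define F where "F = (\<lambda>f. \<Sum>i\<in>I. \<bar>inner f (X i)\<bar>^2)"
  have finI: "finite I" unfolding I_def by auto
  define j0 :: 'n where "j0 = (LEAST i. True)"
  have all: "\<forall>i<j0. u$i = 0" for u :: "real^('n::{finite,wellorder})"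
    unfolding j0_def using not_less_Least by blast
  have pos: "F f > 0" if f: "f \<noteq> 0" for f
  proof -
    have "\<exists>k<card {i. j0 \<le> i}. inner f (x j0 k) \<noteq> 0"
    proof (rule ccontr)
      assume "\<not> ?thesis"
      then have z: "\<And>y. y \<in> x j0 ` {..<card {i. j0 \<le> i}} \<Longrightarrow> inner f y = 0" by auto
      have "f \<in> span (x j0 ` {..<card {i. j0 \<le> i}})"
        using span_Vj[OF zero_before distinct indep, of j0] all by auto
      moreover have "linear (inner f)" by (auto simp: linear_iff inner_add_right)
      ultimately have "inner f f = 0"
        using linear_eq_0_on_span[of "inner f" _ f] z by blast
      with f show False by simp
    qed
    then obtain k where k: "k < card {i. j0 \<le> i}" "inner f (x j0 k) \<noteq> 0" by blast
    have mem: "(j0, k) \<in> I" using k unfolding I_def by auto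
    have "0 < \<bar>inner f (X (j0,k))\<bar>^2" using k by (simp add: X_def)
    also have "\<dots> \<le> F f" unfolding F_def
      by (rule member_le_sum[OF mem _ finI]) simp
    finally show ?thesis .
  qed
  have ne: "sphere (0::real^('n::{finite,wellorder})) 1 \<noteq> {}"
  proof -
    have "axis j0 (1::real) \<in> sphere 0 1" by simp
    then show ?thesis by blast
  qed
  have cont: "continuous_on (sphere 0 1) F" unfolding F_def
    by (intro continuous_intros)
  obtain u0 where u0: "u0 \<in> sphere 0 1" and umin: "\<And>y. y \<in> sphere 0 1 \<Longrightarrow> F u0 \<le> F y"
    using continuous_attains_inf[OF compact_sphere ne cont] by blast
  define A where "A = F u0"
  have A0: "A > 0" unfolding A_def using u0 pos by (metis mem_sphere_0 norm_zero zero_neq_one)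
  have scale: "F (c *\<^sub>R u) = c^2 * F u" for c u
    by (simp add: F_def sum_distrib_left abs_mult power_mult_distrib)
  have lower: "A * (norm f)^2 \<le> F f" for f
  proof (cases "f = 0")
    case True then show ?thesis by (simp add: F_def)
  next
    case False
    define u where "u = (1 / norm f) *\<^sub>R f"
    have us: "u \<in> sphere 0 1" using False by (simp add: u_def)
    have fu: "f = norm f *\<^sub>R u" using False by (simp add: u_def)
    have "F f = (norm f)^2 * F u" by (subst fu, rule scale)
    moreover have "A \<le> F u" using umin[OF us] by (simp add: A_def)
    ultimately show ?thesis by (simp add: mult.commute mult_right_mono)
  qed
  define Bc where "Bc = (\<Sum>i\<in>I. (norm (X i))^2)"
  have upper: "F f \<le> Bc * (norm f)^2" for f
  proof -
    have "F f \<le> (\<Sum>i\<in>I. (norm (X i))^2 * (norm f)^2)" unfolding F_def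
    proof (rule sum_mono)
      fix i
      have "\<bar>inner f (X i)\<bar>^2 \<le> (norm f * norm (X i))^2"
        by (rule power_mono[OF Cauchy_Schwarz_ineq2]) simp
      then show "\<bar>inner f (X i)\<bar>^2 \<le> (norm (X i))^2 * (norm f)^2"
        by (simp add: power_mult_distrib mult.commute)
    qed
    also have "\<dots> = Bc * (norm f)^2" by (simp add: Bc_def sum_distrib_right)
    finally show ?thesis .
  qed
  have LU: "A * (norm f)^2 \<le> F f \<and> F f \<le> max A Bc * (norm f)^2" for f
    using lower[of f] order_trans[OF upper[of f] mult_right_mono[of Bc "max A Bc" "(norm f)^2"]]
    by simp
  show ?thesis unfolding is_frame_def
    apply (rule exI[of _ A])
    apply (rule exI[of _ "max A Bc"])
    using A0 LU unfolding F_def I_def X_def by auto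
qed

theorem mainTheorem4:
  fixes x :: "'n::{finite,wellorder} \<Rightarrow> nat \<Rightarrow> real^('n::{finite,wellorder})"
  assumes zero_before: "\<And>j k i. k < card {i. j \<le> i} \<Longrightarrow> i < j \<Longrightarrow> x j k $ i = 0"
      and nonzero_at: "\<And>j k. k < card {i. j \<le> i} \<Longrightarrow> x j k $ j \<noteq> 0"
      and distinct: "\<And>j. inj_on (x j) {..<card {i. j \<le> i}}"
      and indep: "\<And>j. independent (x j ` {..<card {i. j \<le> i}})"
  shows "is_frame (SIGMA j:UNIV. {..<card {i. j \<le> i}}) (\<lambda>(j, k). x j k)
       \<and> injective_family (SIGMA j:UNIV. {..<card {i. j \<le> i}}) (\<lambda>(j, k). x j k)"
proof
  show "is_frame (SIGMA j:UNIV. {..<card {i. j \<le> i}}) (\<lambda>(j, k). x j k)"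
    by (rule frame_part[OF zero_before distinct indep])
  show "injective_family (SIGMA j:UNIV. {..<card {i. j \<le> i}}) (\<lambda>(j, k). x j k)"
    unfolding injective_family_def
  proof (intro allI impI)
    fix T :: "real^('n::{finite,wellorder}) \<Rightarrow> real^('n::{finite,wellorder})"
    assume a: "self_adjoint T \<and> (\<forall>i\<in>(SIGMA j:UNIV. {..<card {i. j \<le> i}}). inner (T ((\<lambda>(j, k). x j k) i)) ((\<lambda>(j, k). x j k) i) = 0)"
    show "T = (\<lambda>_. 0)"
    proof (rule inj_part[OF zero_before nonzero_at distinct indep])
      show "linear T" using a by (simp add: self_adjoint_def bounded_linear.linear)
      show "\<And>u v. inner (T u) v = inner u (T v)" using a by (simp add: self_adjoint_def)
      show "\<And>j k. k < card {i. j \<le> i} \<Longrightarrow> inner (T (x j k)) (x j k) = 0" using a by auto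
    qed
  qed
qed

end
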